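(* Let $n\ge5$ and let $G$ be the bipyramid graph on $[n]$. Then $$\Big|\sum_{s=3}^{n}(-1)^{s-3}(s-3)!\,\pi_G(s)\Big|=n-4.$$
   Context: Bipyramid graph. For $n\ge5$, the bipyramid graph $G$ on $[n]$ consists of the edges of the $(n-2)$-cycle $3,4,\dots,n,3$ together with the edges $\{1,j\}$ and $\{2,j\}$ for $j=3,\dots,n$. Independent partitions. $\pi_G(s)$ denotes the number of set partitions of $[n]$ into exactly $s$ nonempty blocks, each of which is an independent set of $G$, i.e. contains no edge of $G$. (The paper uses this identity to conclude that, assuming its conjectured formula $\mu(G)=\big|\sum_{s=3}^n(-1)^{s-3}(s-3)!\,\pi_G(s)\big|$ for copious graphs, the ML degree of the bipyramid is $n-4$.) *)

theory Defs
  imports Main "HOL-Library.Disjoint_Sets"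
begin

definition bipyramid_edges :: "nat \<Rightarrow> nat set set" where
  "bipyramid_edges n =
     {{j, j + 1} | j. 3 \<le> j \<and> j < n} \<union> {{n, 3}}
     \<union> {{1, j} | j. 3 \<le> j \<and> j \<le> n}
     \<union> {{2, j} | j. 3 \<le> j \<and> j \<le> n}"

definition independent_set :: "'a set set \<Rightarrow> 'a set \<Rightarrow> bool" where
  "independent_set E B \<longleftrightarrow> (\<forall>e\<in>E. \<not> e \<subseteq> B)"

definition indep_partition_count :: "'a set \<Rightarrow> 'a set set \<Rightarrow> nat \<Rightarrow> nat" where
  "indep_partition_count V E s =
     card {P. partition_on V P \<and> card P = s \<and> (\<forall>B\<in>P. independent_set E B)}"

end

theory Submission
  imports Defs
begin

lemma partition_on_iff:
  "partition_on A P \<longleftrightarrow> (\<forall>B\<in>P. B \<noteq> {} \<and> B \<subseteq> A) \<and> (\<forall>x\<in>A. \<exists>!B. B \<in> P \<and> x \<in> B)"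
  unfolding partition_on_def disjoint_def by blast

definition ext2 :: "'a \<Rightarrow> 'a set set \<Rightarrow> 'a set \<Rightarrow> 'a set set" where
  "ext2 v P B = insert (insert v B) (P - {B})"

definition del :: "'a \<Rightarrow> 'a set set \<Rightarrow> 'a set set" where
  "del v Q = (\<lambda>B. B - {v}) ` Q - {{}}"

lemma del_id:
  assumes "\<forall>C\<in>P. v \<notin> C"
  shows "(\<lambda>B. B - {v}) ` P = P"
proof -
  have "(\<lambda>B. B - {v}) ` P = (\<lambda>B. B) ` P" by (rule image_cong) (use assms in auto)
  then show ?thesis by simp
qed

lemma del_ext1:
  assumes P: "partition_on V P" and v: "v \<notin> V"
  shows "del v (insert {v} P) = P"
proof -
  have vnot: "\<forall>C\<in>P. v \<notin> C" "{} \<notin> P" using P v unfolding partition_on_iff by blast+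
  have "del v (insert {v} P) = insert {} P - {{}}"
    unfolding del_def using del_id[OF vnot(1)] by simp
  then show ?thesis using vnot(2) by blast
qed

lemma del_ext2:
  assumes P: "partition_on V P" and v: "v \<notin> V" and B: "B \<in> P"
  shows "del v (ext2 v P B) = P"
proof -
  have vnot: "\<forall>C\<in>P. v \<notin> C" "{} \<notin> P" using P v unfolding partition_on_iff by blast+
  have vB: "v \<notin> B" using vnot B by blast
  have vnot2: "\<forall>C\<in>P - {B}. v \<notin> C" using vnot(1) by blast
  have e1: "(\<lambda>B. B - {v}) ` (P - {B}) = P - {B}" by (rule del_id[OF vnot2])
  have e2: "insert v B - {v} = B" using vB by blast
  have "(\<lambda>B. B - {v}) ` ext2 v P B = insert B (P - {B})"
    unfolding ext2_def image_insert e1 e2 ..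
  also have "\<dots> = P" using B by blast
  finally show ?thesis unfolding del_def using vnot(2) by blast
qed

lemma part_ext1:
  assumes P: "partition_on V P" and v: "v \<notin> V"
  shows "partition_on (insert v V) (insert {v} P)"
proof -
  have "disjnt {v} (\<Union>P)" using P v unfolding partition_on_def disjnt_def by blast
  moreover have "insert v V - {v} = V" using v by blast
  ultimately show ?thesis using partition_on_insert[of "{v}" P "insert v V"] P by simp
qed

lemma part_ext2:
  assumes P: "partition_on V P" and v: "v \<notin> V" and B: "B \<in> P"
  shows "partition_on (insert v V) (ext2 v P B)"
proof -
  have blocks: "\<forall>C\<in>P. C \<noteq> {} \<and> C \<subseteq> V" and uniq: "\<forall>x\<in>V. \<exists>!C. C \<in> P \<and> x \<in> C"
    using P unfolding partition_on_iff by blast+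
  have vnot: "\<forall>C\<in>P. v \<notin> C" using blocks v by blast
  show ?thesis unfolding partition_on_iff ext2_def
  proof (intro conjI)
    show "\<forall>C\<in>insert (insert v B) (P - {B}). C \<noteq> {} \<and> C \<subseteq> insert v V" using blocks B by blast
  next
    show "\<forall>x\<in>insert v V. \<exists>!C. C \<in> insert (insert v B) (P - {B}) \<and> x \<in> C"
    proof
    fix x assume x: "x \<in> insert v V"
    show "\<exists>!C. C \<in> insert (insert v B) (P - {B}) \<and> x \<in> C"
    proof (cases "x = v")
      case True
      then show ?thesis using vnot by blast
    next
      case False
      then have xV: "x \<in> V" using x by blast
      then obtain D where D: "D \<in> P" "x \<in> D" and Du: "\<And>E. E \<in> P \<Longrightarrow> x \<in> E \<Longrightarrow> E = D"
        using uniq by blast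
      show ?thesis
      proof (cases "D = B")
        case True
        show ?thesis
        proof (rule ex1I[of _ "insert v B"])
          show "insert v B \<in> insert (insert v B) (P - {B}) \<and> x \<in> insert v B" using True D by blast
          fix E assume "E \<in> insert (insert v B) (P - {B}) \<and> x \<in> E"
          then show "E = insert v B" using Du True by blast
        qed
      next
        case False
        show ?thesis
        proof (rule ex1I[of _ D])
          show "D \<in> insert (insert v B) (P - {B}) \<and> x \<in> D" using False D by blast
          fix E assume E: "E \<in> insert (insert v B) (P - {B}) \<and> x \<in> E"
          show "E = D"
          proof (cases "E = insert v B")
            case True
            then have "x \<in> B" using E \<open>x \<noteq> v\<close> by blast
            then show ?thesis using Du B False by blast
          next
            case False
            then show ?thesis using E Du by blast
          qed
        qed
      qed
    qed
  qed
  qed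
qed


lemma same_block:
  assumes "partition_on A P" "B1 \<in> P" "B2 \<in> P" "x \<in> B1" "x \<in> B2"
  shows "B1 = B2"
  using assms unfolding partition_on_def disjoint_def by blast

lemma del_part:
  assumes Q: "partition_on (insert v V) Q" and v: "v \<notin> V"
  shows "partition_on V (del v Q)"
proof -
  have "partition_on ((\<lambda>B. B - {v}) (insert v V)) ((\<lambda>B. B - {v}) ` Q - {{}})"
    by (rule partition_on_transform[OF Q]) (auto simp: disjnt_def)
  moreover have "(\<lambda>B. B - {v}) (insert v V) = V" using v by auto
  ultimately show ?thesis unfolding del_def by simp
qed

lemma recover:
  assumes Q: "partition_on (insert v V) Q" and v: "v \<notin> V"
  shows "Q = insert {v} (del v Q) \<or> (\<exists>B\<in>del v Q. Q = ext2 v (del v Q) B)"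
proof -
  have blocks: "\<forall>C\<in>Q. C \<noteq> {} \<and> C \<subseteq> insert v V" and uniq: "\<forall>x\<in>insert v V. \<exists>!C. C \<in> Q \<and> x \<in> C"
    using Q unfolding partition_on_iff by blast+
  obtain Bv where Bv: "Bv \<in> Q" "v \<in> Bv" and Bvu: "\<And>C. C \<in> Q \<Longrightarrow> v \<in> C \<Longrightarrow> C = Bv"
    using uniq by blast
  have vnot: "\<forall>C\<in>Q - {Bv}. v \<notin> C" using Bvu by blast
  have e1: "(\<lambda>B. B - {v}) ` (Q - {Bv}) = Q - {Bv}" by (rule del_id[OF vnot])
  have ne: "{} \<notin> Q - {Bv}" using blocks by blast
  have Qeq: "Q = insert Bv (Q - {Bv})" using Bv by blast
  have D: "del v Q = insert (Bv - {v}) (Q - {Bv}) - {{}}"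
    unfolding del_def by (subst Qeq, unfold image_insert e1, rule refl)
  show ?thesis
  proof (cases "Bv = {v}")
    case True
    then have "del v Q = Q - {Bv}" using D ne by auto
    then have "Q = insert {v} (del v Q)" using True Bv by blast
    then show ?thesis ..
  next
    case False
    define B' where "B' = Bv - {v}"
    have B'ne: "B' \<noteq> {}" using False Bv(2) unfolding B'_def by blast
    have D2: "del v Q = insert B' (Q - {Bv})" using D B'ne ne unfolding B'_def by blast
    have B'notin: "B' \<notin> Q - {Bv}"
    proof
      assume "B' \<in> Q - {Bv}"
      then obtain C where C: "C \<in> Q" "C \<noteq> Bv" "C = B'" by blast
      then obtain x where "x \<in> C" using B'ne by blast
      then have "x \<in> Bv" "x \<in> C" using C unfolding B'_def by blast+
      then show False using same_block[OF Q C(1) Bv(1)] C(2) by blast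
    qed
    have "ext2 v (del v Q) B' = insert (insert v B') (insert B' (Q - {Bv}) - {B'})"
      unfolding ext2_def D2 ..
    also have "insert B' (Q - {Bv}) - {B'} = Q - {Bv}" using B'notin by blast
    also have "insert v B' = Bv" unfolding B'_def using Bv by blast
    finally have "Q = ext2 v (del v Q) B'" using Qeq by simp
    moreover have "B' \<in> del v Q" using D2 by blast
    ultimately show ?thesis by blast
  qed
qed

lemma ext1_notin:
  assumes P: "partition_on V P" and v: "v \<notin> V"
  shows "insert {v} P \<notin> ext2 v P ` P"
proof
  assume "insert {v} P \<in> ext2 v P ` P"
  then obtain B where B: "B \<in> P" "insert {v} P = ext2 v P B" by blast
  have vnot: "\<forall>C\<in>P. v \<notin> C \<and> C \<noteq> {}" using P v unfolding partition_on_iff by blast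
  have "{v} \<in> ext2 v P B" using B by blast
  then have "{v} = insert v B \<or> {v} \<in> P" unfolding ext2_def by blast
  then show False using vnot B by blast
qed

lemma ext2_inj:
  assumes P: "partition_on V P" and v: "v \<notin> V"
  shows "inj_on (ext2 v P) P"
proof
  fix B1 B2 assume B: "B1 \<in> P" "B2 \<in> P" "ext2 v P B1 = ext2 v P B2"
  have vnot: "\<forall>C\<in>P. v \<notin> C" using P v unfolding partition_on_iff by blast
  have "insert v B1 \<in> ext2 v P B2" using B unfolding ext2_def by blast
  then have "insert v B1 = insert v B2 \<or> insert v B1 \<in> P" unfolding ext2_def by blast
  then have "insert v B1 = insert v B2" using vnot by blast
  then show "B1 = B2" using vnot B by (metis insert_ident)
qed

lemma sum_insert_part:
  fixes f :: "'a set set \<Rightarrow> 'b::comm_monoid_add"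
  assumes fin: "finite V" and v: "v \<notin> V"
  shows "(\<Sum>Q | partition_on (insert v V) Q. f Q)
       = (\<Sum>P | partition_on V P. f (insert {v} P) + (\<Sum>B\<in>P. f (ext2 v P B)))"
proof -
  define E where "E P = insert (insert {v} P) (ext2 v P ` P)" for P
  have finP: "finite P" if "partition_on V P" for P using finite_elements[OF fin that] .
  have inner: "f (insert {v} P) + (\<Sum>B\<in>P. f (ext2 v P B)) = sum f (E P)" if P: "partition_on V P" for P
  proof -
    have "sum f (E P) = f (insert {v} P) + sum f (ext2 v P ` P)"
      unfolding E_def by (rule sum.insert) (use finP[OF P] ext1_notin[OF P v] in auto)
    also have "sum f (ext2 v P ` P) = (\<Sum>B\<in>P. f (ext2 v P B))"
      by (rule sum.reindex[OF ext2_inj[OF P v], unfolded comp_def])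
    finally show ?thesis by simp
  qed
  have U: "{Q. partition_on (insert v V) Q} = (\<Union>P\<in>{P. partition_on V P}. E P)"
  proof (intro equalityI subsetI)
    fix Q assume "Q \<in> {Q. partition_on (insert v V) Q}"
    then have Q: "partition_on (insert v V) Q" by simp
    have "del v Q \<in> {P. partition_on V P}" using del_part[OF Q v] by simp
    moreover have "Q \<in> E (del v Q)" using recover[OF Q v] unfolding E_def by blast
    ultimately show "Q \<in> (\<Union>P\<in>{P. partition_on V P}. E P)" by blast
  next
    fix Q assume "Q \<in> (\<Union>P\<in>{P. partition_on V P}. E P)"
    then obtain P where P: "partition_on V P" and "Q \<in> E P" by blast
    then show "Q \<in> {Q. partition_on (insert v V) Q}"
      unfolding E_def using part_ext1[OF P v] part_ext2[OF P v] by auto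
  qed
  have delE: "del v Q = P" if P: "partition_on V P" and "Q \<in> E P" for P Q
    using that del_ext1[OF P v] del_ext2[OF P v] unfolding E_def by auto
  have "(\<Sum>Q | partition_on (insert v V) Q. f Q) = sum f (\<Union>P\<in>{P. partition_on V P}. E P)"
    using U by simp
  also have "\<dots> = (\<Sum>P | partition_on V P. sum f (E P))"
  proof (rule sum.UNION_disjoint)
    show "finite {P. partition_on V P}" by (rule finitely_many_partition_on[OF fin])
    show "\<forall>P\<in>{P. partition_on V P}. finite (E P)" unfolding E_def using finP by auto
    show "\<forall>P1\<in>{P. partition_on V P}. \<forall>P2\<in>{P. partition_on V P}. P1 \<noteq> P2 \<longrightarrow> E P1 \<inter> E P2 = {}"
      using delE by blast
  qed
  also have "\<dots> = (\<Sum>P | partition_on V P. f (insert {v} P) + (\<Sum>B\<in>P. f (ext2 v P B)))"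
    by (rule sum.cong) (auto simp: inner)
  finally show ?thesis .
qed

definition pind :: "nat set \<Rightarrow> bool" where
  "pind B \<longleftrightarrow> (\<forall>i. i \<in> B \<longrightarrow> Suc i \<notin> B)"

definition hasA :: "nat \<Rightarrow> nat set set \<Rightarrow> bool" where
  "hasA j P \<longleftrightarrow> (\<exists>B\<in>P. 3 \<in> B \<and> j \<in> B)"

definition PA :: "nat \<Rightarrow> nat set set set" where
  "PA j = {P. partition_on {3..j} P \<and> (\<forall>B\<in>P. pind B) \<and> hasA j P}"

definition PB :: "nat \<Rightarrow> nat set set set" where
  "PB j = {P. partition_on {3..j} P \<and> (\<forall>B\<in>P. pind B) \<and> \<not> hasA j P}"

lemma sum_filter_part:
  assumes "finite V"
  shows "(\<Sum>P\<in>{P. partition_on V P \<and> R P}. h P) = (\<Sum>P | partition_on V P. if R P then h P else 0)"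
proof -
  have "{P. partition_on V P \<and> R P} = {P \<in> {P. partition_on V P}. R P}" by blast
  then show ?thesis using sum.inter_filter[OF finitely_many_partition_on[OF assms], of h R] by simp
qed

lemma card_ext1:
  assumes P: "partition_on V P" and fin: "finite V" and v: "v \<notin> V"
  shows "card (insert {v} P) = Suc (card P)"
proof -
  have "{v} \<notin> P" using P v unfolding partition_on_iff by blast
  then show ?thesis using finite_elements[OF fin P] by simp
qed

lemma card_ext2:
  assumes P: "partition_on V P" and fin: "finite V" and v: "v \<notin> V" and B: "B \<in> P"
  shows "card (ext2 v P B) = card P"
proof -
  have fP: "finite P" using finite_elements[OF fin P] .
  have "insert v B \<notin> P - {B}" using P v unfolding partition_on_iff by blast
  then have "card (ext2 v P B) = Suc (card (P - {B}))" unfolding ext2_def using fP by simp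
  also have "\<dots> = card P" using card.remove[OF fP B] by simp
  finally show ?thesis .
qed

lemma card_ge1:
  assumes P: "partition_on V P" and fin: "finite V" and x: "x \<in> V"
  shows "card P \<ge> 1"
proof -
  have "P \<noteq> {}" using P x unfolding partition_on_def by blast
  then show ?thesis using finite_elements[OF fin P] by (simp add: Suc_le_eq card_gt_0_iff)
qed

lemma card_ge2:
  assumes P: "partition_on V P" and fin: "finite V" and x: "x \<in> V" and y: "y \<in> V"
    and sep: "\<not> (\<exists>B\<in>P. x \<in> B \<and> y \<in> B)"
  shows "card P \<ge> 2"
proof -
  obtain Bx By where "Bx \<in> P" "x \<in> Bx" "By \<in> P" "y \<in> By" using P x y unfolding partition_on_def by blast
  then have "Bx \<noteq> By" "{Bx, By} \<subseteq> P" using sep by blast+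
  then have "card {Bx, By} \<le> card P" using finite_elements[OF fin P] by (intro card_mono) auto
  then show ?thesis using \<open>Bx \<noteq> By\<close> by simp
qed

lemma count_blocks:
  assumes P: "partition_on V P" and fin: "finite V" and x: "x \<in> V" and y: "y \<in> V"
  shows "int (card {B\<in>P. x \<notin> B \<and> y \<notin> B}) = int (card P) - (if (\<exists>B\<in>P. x \<in> B \<and> y \<in> B) then 1 else 2)"
    and "card {B\<in>P. x \<in> B \<and> y \<notin> B} = (if (\<exists>B\<in>P. x \<in> B \<and> y \<in> B) then 0 else 1)"
proof -
  have fP: "finite P" using finite_elements[OF fin P] .
  obtain Bx where Bx: "Bx \<in> P" "x \<in> Bx" using P x unfolding partition_on_def by blast
  obtain By where By: "By \<in> P" "y \<in> By" using P y unfolding partition_on_def by blast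
  have ux: "\<And>C. C \<in> P \<Longrightarrow> x \<in> C \<Longrightarrow> C = Bx" using same_block[OF P _ Bx(1)] Bx(2) by blast
  have uy: "\<And>C. C \<in> P \<Longrightarrow> y \<in> C \<Longrightarrow> C = By" using same_block[OF P _ By(1)] By(2) by blast
  have ex: "(\<exists>B\<in>P. x \<in> B \<and> y \<in> B) \<longleftrightarrow> Bx = By" using ux uy Bx By by blast
  have split: "{B\<in>P. x \<notin> B \<and> y \<notin> B} = P - {Bx, By}" using ux uy Bx By by blast
  have sub: "{Bx, By} \<subseteq> P" using Bx By by blast
  have "card {B\<in>P. x \<notin> B \<and> y \<notin> B} = card P - card {Bx, By}"
    unfolding split using fP sub by (simp add: card_Diff_subset finite_subset)
  moreover have "card {Bx, By} \<le> card P" using fP sub by (rule card_mono)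
  ultimately show "int (card {B\<in>P. x \<notin> B \<and> y \<notin> B}) = int (card P) - (if (\<exists>B\<in>P. x \<in> B \<and> y \<in> B) then 1 else 2)"
    unfolding ex by (cases "Bx = By") auto
  show "card {B\<in>P. x \<in> B \<and> y \<notin> B} = (if (\<exists>B\<in>P. x \<in> B \<and> y \<in> B) then 0 else 1)"
  proof (cases "Bx = By")
    case True
    have e: "{B\<in>P. x \<in> B \<and> y \<notin> B} = {}" using ux By True by blast
    show ?thesis unfolding e using True ex by simp
  next
    case False
    have e: "{B\<in>P. x \<in> B \<and> y \<notin> B} = {Bx}" using ux uy Bx By False by blast
    show ?thesis unfolding e using False ex by simp
  qed
qed

lemma ivl_insert: "3 \<le> j \<Longrightarrow> {3..Suc j} = insert (Suc j) {3..j::nat}"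
  by auto

lemma blocks_sub:
  assumes "partition_on {3..j} P" "C \<in> P"
  shows "C \<subseteq> {3..j}"
  using assms unfolding partition_on_def by blast

lemma pind_ext1:
  assumes P: "partition_on {3..j} P"
  shows "(\<forall>C\<in>insert {Suc j} P. pind C) \<longleftrightarrow> (\<forall>C\<in>P. pind C)"
  by (auto simp: pind_def)

lemma pind_insert:
  assumes "B \<subseteq> {3..j}"
  shows "pind (insert (Suc j) B) \<longleftrightarrow> pind B \<and> j \<notin> B"
  using assms unfolding pind_def by (auto; force)

lemma pind_mono: "pind B \<Longrightarrow> C \<subseteq> B \<Longrightarrow> pind C"
  unfolding pind_def by blast

lemma pind_ext2:
  assumes P: "partition_on {3..j} P" and B: "B \<in> P"
  shows "(\<forall>C\<in>ext2 (Suc j) P B. pind C) \<longleftrightarrow> (\<forall>C\<in>P. pind C) \<and> j \<notin> B"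
proof -
  have Bs: "B \<subseteq> {3..j}" using blocks_sub[OF P B] .
  have "(\<forall>C\<in>ext2 (Suc j) P B. pind C) \<longleftrightarrow> pind (insert (Suc j) B) \<and> (\<forall>C\<in>P - {B}. pind C)"
    unfolding ext2_def by blast
  also have "\<dots> \<longleftrightarrow> pind B \<and> j \<notin> B \<and> (\<forall>C\<in>P - {B}. pind C)" using pind_insert[OF Bs] by blast
  also have "\<dots> \<longleftrightarrow> (\<forall>C\<in>P. pind C) \<and> j \<notin> B" using B by blast
  finally show ?thesis .
qed

lemma hasA_ext1:
  assumes P: "partition_on {3..j} P" and j: "3 \<le> j"
  shows "\<not> hasA (Suc j) (insert {Suc j} P)"
proof -
  have "\<forall>C\<in>P. Suc j \<notin> C" using blocks_sub[OF P] by fastforce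
  then show ?thesis unfolding hasA_def using j by auto
qed

lemma hasA_ext2:
  assumes P: "partition_on {3..j} P" and B: "B \<in> P" and j: "3 \<le> j"
  shows "hasA (Suc j) (ext2 (Suc j) P B) \<longleftrightarrow> 3 \<in> B"
proof -
  have "\<forall>C\<in>P. Suc j \<notin> C" using blocks_sub[OF P] by fastforce
  then show ?thesis unfolding hasA_def ext2_def using B j by auto
qed

lemma sum_if_const:
  fixes c :: int
  assumes "finite P"
  shows "(\<Sum>B\<in>P. if Q B then c else 0) = c * int (card {B\<in>P. Q B})"
  using sum.inter_filter[OF assms, of "\<lambda>_. c" Q, symmetric] by simp

lemma recA:
  fixes g :: "nat \<Rightarrow> int"
  assumes j: "3 \<le> j"
  shows "(\<Sum>P\<in>PA (Suc j). g (card P)) = (\<Sum>P\<in>PB j. g (card P))"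
proof -
  define f where "f Q = (if (\<forall>C\<in>Q. pind C) \<and> hasA (Suc j) Q then g (card Q) else 0)" for Q
  have fin: "finite {3..j}" by simp
  have v: "Suc j \<notin> {3..j}" by simp
  have "(\<Sum>P\<in>PA (Suc j). g (card P)) = (\<Sum>Q | partition_on {3..Suc j} Q. f Q)"
    unfolding PA_def f_def by (rule sum_filter_part) simp
  also have "\<dots> = (\<Sum>P | partition_on {3..j} P. f (insert {Suc j} P) + (\<Sum>B\<in>P. f (ext2 (Suc j) P B)))"
    unfolding ivl_insert[OF j] by (rule sum_insert_part[OF fin v])
  also have "\<dots> = (\<Sum>P | partition_on {3..j} P. if (\<forall>C\<in>P. pind C) \<and> \<not> hasA j P then g (card P) else 0)"
  proof (rule sum.cong[OF refl])
    fix P assume "P \<in> {P. partition_on {3..j} P}"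
    then have P: "partition_on {3..j} P" by simp
    have fP: "finite P" using finite_elements[OF fin P] .
    have 1: "f (insert {Suc j} P) = 0" unfolding f_def using hasA_ext1[OF P j] by simp
    have 2: "(\<Sum>B\<in>P. f (ext2 (Suc j) P B)) = (\<Sum>B\<in>P. if (\<forall>C\<in>P. pind C) \<and> 3 \<in> B \<and> j \<notin> B then g (card P) else 0)"
      by (rule sum.cong[OF refl]) (auto simp: f_def pind_ext2[OF P] hasA_ext2[OF P _ j] card_ext2[OF P fin v])
    have 3: "(\<Sum>B\<in>P. if (\<forall>C\<in>P. pind C) \<and> 3 \<in> B \<and> j \<notin> B then g (card P) else 0)
        = (if (\<forall>C\<in>P. pind C) \<and> \<not> hasA j P then g (card P) else 0)"
    proof (cases "\<forall>C\<in>P. pind C")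
      case True
      have "(\<Sum>B\<in>P. if (\<forall>C\<in>P. pind C) \<and> 3 \<in> B \<and> j \<notin> B then g (card P) else 0)
          = g (card P) * int (card {B\<in>P. 3 \<in> B \<and> j \<notin> B})"
        using True sum_if_const[OF fP, of "\<lambda>B. 3 \<in> B \<and> j \<notin> B" "g (card P)"] by simp
      also have "\<dots> = (if (\<forall>C\<in>P. pind C) \<and> \<not> hasA j P then g (card P) else 0)"
        using count_blocks(2)[OF P fin, of 3 j] j True unfolding hasA_def by (cases "\<exists>B\<in>P. 3 \<in> B \<and> j \<in> B") auto
      finally show ?thesis .
    next
      case False
      then have nb: "(\<forall>C\<in>P. pind C) = False" by blast
      show ?thesis unfolding nb by simp
    qed
    show "f (insert {Suc j} P) + (\<Sum>B\<in>P. f (ext2 (Suc j) P B)) = (if (\<forall>C\<in>P. pind C) \<and> \<not> hasA j P then g (card P) else 0)"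
      using 1 2 3 by simp
  qed
  also have "\<dots> = (\<Sum>P\<in>PB j. g (card P))"
    unfolding PB_def by (rule sum_filter_part[symmetric]) simp
  finally show ?thesis .
qed

lemma recB:
  fixes g :: "nat \<Rightarrow> int"
  assumes j: "3 \<le> j"
  shows "(\<Sum>P\<in>PB (Suc j). g (card P)) =
     (\<Sum>P\<in>PA j. g (Suc (card P)) + (int (card P) - 1) * g (card P))
   + (\<Sum>P\<in>PB j. g (Suc (card P)) + (int (card P) - 2) * g (card P))"
proof -
  define f where "f Q = (if (\<forall>C\<in>Q. pind C) \<and> \<not> hasA (Suc j) Q then g (card Q) else 0)" for Q
  define X where "X P = g (Suc (card P)) + (int (card P) - 1) * g (card P)" for P :: "nat set set"
  define Y where "Y P = g (Suc (card P)) + (int (card P) - 2) * g (card P)" for P :: "nat set set"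
  have fin: "finite {3..j}" by simp
  have v: "Suc j \<notin> {3..j}" by simp
  have "(\<Sum>P\<in>PB (Suc j). g (card P)) = (\<Sum>Q | partition_on {3..Suc j} Q. f Q)"
    unfolding PB_def f_def by (rule sum_filter_part) simp
  also have "\<dots> = (\<Sum>P | partition_on {3..j} P. f (insert {Suc j} P) + (\<Sum>B\<in>P. f (ext2 (Suc j) P B)))"
    unfolding ivl_insert[OF j] by (rule sum_insert_part[OF fin v])
  also have "\<dots> = (\<Sum>P | partition_on {3..j} P. (if (\<forall>C\<in>P. pind C) \<and> hasA j P then X P else 0)
         + (if (\<forall>C\<in>P. pind C) \<and> \<not> hasA j P then Y P else 0))"
  proof (rule sum.cong[OF refl])
    fix P assume "P \<in> {P. partition_on {3..j} P}"
    then have P: "partition_on {3..j} P" by simp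
    have fP: "finite P" using finite_elements[OF fin P] .
    have 1: "f (insert {Suc j} P) = (if (\<forall>C\<in>P. pind C) then g (Suc (card P)) else 0)"
      unfolding f_def using hasA_ext1[OF P j] pind_ext1[OF P] card_ext1[OF P fin v] by simp
    have 2: "(\<Sum>B\<in>P. f (ext2 (Suc j) P B)) = (\<Sum>B\<in>P. if (\<forall>C\<in>P. pind C) \<and> 3 \<notin> B \<and> j \<notin> B then g (card P) else 0)"
      by (rule sum.cong[OF refl]) (auto simp: f_def pind_ext2[OF P] hasA_ext2[OF P _ j] card_ext2[OF P fin v])
    show "f (insert {Suc j} P) + (\<Sum>B\<in>P. f (ext2 (Suc j) P B)) = (if (\<forall>C\<in>P. pind C) \<and> hasA j P then X P else 0)
         + (if (\<forall>C\<in>P. pind C) \<and> \<not> hasA j P then Y P else 0)"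
    proof (cases "\<forall>C\<in>P. pind C")
      case True
      have cnt: "int (card {B\<in>P. 3 \<notin> B \<and> j \<notin> B}) = int (card P) - (if hasA j P then 1 else 2)"
        unfolding hasA_def by (rule count_blocks(1)[OF P fin]) (use j in auto)
      have "(\<Sum>B\<in>P. if (\<forall>C\<in>P. pind C) \<and> 3 \<notin> B \<and> j \<notin> B then g (card P) else 0)
          = g (card P) * int (card {B\<in>P. 3 \<notin> B \<and> j \<notin> B})"
        using True sum_if_const[OF fP, of "\<lambda>B. 3 \<notin> B \<and> j \<notin> B" "g (card P)"] by simp
      also have "\<dots> = g (card P) * (int (card P) - (if hasA j P then 1 else 2))"
        unfolding cnt ..
      finally show ?thesis unfolding 1 2 using True by (cases "hasA j P") (simp_all add: X_def Y_def algebra_simps)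
    next
      case False
      then have nb: "(\<forall>C\<in>P. pind C) = False" by blast
      show ?thesis unfolding 1 2 nb by simp
    qed
  qed
  also have "\<dots> = (\<Sum>P | partition_on {3..j} P. if (\<forall>C\<in>P. pind C) \<and> hasA j P then X P else 0)
      + (\<Sum>P | partition_on {3..j} P. if (\<forall>C\<in>P. pind C) \<and> \<not> hasA j P then Y P else 0)"
    by (rule sum.distrib)
  also have "\<dots> = (\<Sum>P\<in>PA j. X P) + (\<Sum>P\<in>PB j. Y P)"
    unfolding PA_def PB_def by (simp only: sum_filter_part[OF fin])
  finally show ?thesis unfolding X_def Y_def .
qed

definition u :: "nat \<Rightarrow> int" where "u k = (-1)^k * int (fact (k - 1))"
definition w2 :: "nat \<Rightarrow> int" where "w2 k = (-1)^k * int (fact (k - 2))"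

lemma u_id1: "k \<ge> 1 \<Longrightarrow> u (Suc k) + (int k - 1) * u k = - u k"
  by (cases k) (auto simp: u_def algebra_simps of_nat_mult)
lemma u_id2: "k \<ge> 1 \<Longrightarrow> u (Suc k) + (int k - 2) * u k = - 2 * u k"
  by (cases k) (auto simp: u_def algebra_simps of_nat_mult)
lemma w2_id1: "k \<ge> 2 \<Longrightarrow> w2 (Suc k) + (int k - 1) * w2 k = 0"
proof -
  assume "k \<ge> 2" then obtain m where "k = Suc (Suc m)" by (metis add_2_eq_Suc le_Suc_ex)
  then show ?thesis by (auto simp: w2_def algebra_simps of_nat_mult)
qed
lemma w2_id2: "k \<ge> 2 \<Longrightarrow> w2 (Suc k) + (int k - 2) * w2 k = - w2 k"
proof -
  assume "k \<ge> 2" then obtain m where "k = Suc (Suc m)" by (metis add_2_eq_Suc le_Suc_ex)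
  then show ?thesis by (auto simp: w2_def algebra_simps of_nat_mult)
qed

lemma part3: "partition_on {3..3::nat} P \<longleftrightarrow> P = {{3}}"
proof -
  have e: "{3..3::nat} = {3}" by simp
  show ?thesis unfolding e
  proof
    assume P: "partition_on {3::nat} P"
    have U: "\<Union>P = {3}" and ne: "{} \<notin> P" using P unfolding partition_on_def by blast+
    have "B = {3}" if B: "B \<in> P" for B
    proof -
      have "B \<subseteq> {3}" using U B by blast
      moreover have "B \<noteq> {}" using ne B by blast
      ultimately show ?thesis by blast
    qed
    moreover have "P \<noteq> {}" using U by blast
    ultimately show "P = {{3}}" by blast
  next
    assume "P = {{3}}" then show "partition_on {3::nat} P" by (simp add: partition_on_space)
  qed
qed

lemma pind3: "pind {3}" by (simp add: pind_def)
lemma hasA3: "hasA 3 {{3}}" by (simp add: hasA_def)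

lemma PA3: "PA 3 = {{{3}}}"
  unfolding PA_def part3 using pind3 hasA3 by blast
lemma PB3: "PB 3 = {}"
  unfolding PB_def part3 using hasA3 by blast

lemma PA_card1: "P \<in> PA j \<Longrightarrow> 3 \<le> j \<Longrightarrow> card P \<ge> 1"
  unfolding PA_def by (rule card_ge1[of "{3..j}" P 3]) auto
lemma PB_card1: "P \<in> PB j \<Longrightarrow> 3 \<le> j \<Longrightarrow> card P \<ge> 2"
  unfolding PB_def hasA_def by (rule card_ge2[of "{3..j}" P 3 j]) auto
lemma PA_card2: "P \<in> PA j \<Longrightarrow> 4 \<le> j \<Longrightarrow> card P \<ge> 2"
proof -
  assume P: "P \<in> PA j" and j: "4 \<le> j"
  have "\<not> (\<exists>B\<in>P. j - 1 \<in> B \<and> j \<in> B)"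
  proof
    assume "\<exists>B\<in>P. j - 1 \<in> B \<and> j \<in> B"
    then obtain B where "B \<in> P" "j - 1 \<in> B" "j \<in> B" by blast
    moreover have "pind B" using P \<open>B \<in> P\<close> unfolding PA_def by blast
    moreover have "Suc (j - 1) = j" using j by simp
    ultimately show False unfolding pind_def by metis
  qed
  then show ?thesis using P j unfolding PA_def by (intro card_ge2[of "{3..j}" P "j - 1" j]) auto
qed

lemma U_formula:
  assumes "3 \<le> j"
  shows "(\<Sum>P\<in>PB j. u (card P)) = (-1)^j * (int j - 3) \<and> (\<Sum>P\<in>PA j. u (card P)) = (-1)^(j+1) * (int j - 4)"
  using assms
proof (induction j rule: nat_induct_at_least)
  case base
  show ?case by (simp add: PA3 PB3 u_def)
next
  case (Suc j)
  have a: "(\<Sum>P\<in>PA (Suc j). u (card P)) = (\<Sum>P\<in>PB j. u (card P))" by (rule recA[OF Suc.hyps(1)])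
  have "(\<Sum>P\<in>PB (Suc j). u (card P)) =
     (\<Sum>P\<in>PA j. u (Suc (card P)) + (int (card P) - 1) * u (card P))
   + (\<Sum>P\<in>PB j. u (Suc (card P)) + (int (card P) - 2) * u (card P))" by (rule recB[OF Suc.hyps(1)])
  also have "\<dots> = (\<Sum>P\<in>PA j. - u (card P)) + (\<Sum>P\<in>PB j. - 2 * u (card P))"
    using PA_card1[OF _ Suc.hyps(1)] PB_card1[OF _ Suc.hyps(1)]
    by (intro arg_cong2[where f="(+)"] sum.cong refl u_id1 u_id2) force+
  also have "\<dots> = - (\<Sum>P\<in>PA j. u (card P)) - 2 * (\<Sum>P\<in>PB j. u (card P))"
    by (simp add: sum_negf sum_distrib_left)
  finally show ?case using a Suc.IH by (simp add: algebra_simps)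
qed

lemma V_formula:
  assumes "4 \<le> j"
  shows "(\<Sum>P\<in>PB j. w2 (card P)) = (-1)^j"
  using assms
proof (induction j rule: nat_induct_at_least)
  case base
  have "(\<Sum>P\<in>PB (Suc 3). w2 (card P)) =
     (\<Sum>P\<in>PA 3. w2 (Suc (card P)) + (int (card P) - 1) * w2 (card P))
   + (\<Sum>P\<in>PB 3. w2 (Suc (card P)) + (int (card P) - 2) * w2 (card P))" by (rule recB) simp
  also have "\<dots> = 1" by (simp add: PA3 PB3 w2_def)
  finally show ?case by (simp add: numeral_eq_Suc)
next
  case (Suc j)
  have j3: "3 \<le> j" using Suc.hyps by simp
  have "(\<Sum>P\<in>PB (Suc j). w2 (card P)) =
     (\<Sum>P\<in>PA j. w2 (Suc (card P)) + (int (card P) - 1) * w2 (card P))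
   + (\<Sum>P\<in>PB j. w2 (Suc (card P)) + (int (card P) - 2) * w2 (card P))" by (rule recB[OF j3])
  also have "\<dots> = (\<Sum>P\<in>PA j. 0) + (\<Sum>P\<in>PB j. - w2 (card P))"
    using PA_card2[OF _ Suc.hyps(1)] PB_card1[OF _ j3]
    by (intro arg_cong2[where f="(+)"] sum.cong refl w2_id1 w2_id2) force+
  also have "\<dots> = - (\<Sum>P\<in>PB j. w2 (card P))"
    by (simp add: sum_negf)
  finally show ?case using Suc.IH by simp
qed

abbreviation bi :: "nat \<Rightarrow> nat set \<Rightarrow> bool" where
  "bi n B \<equiv> independent_set (bipyramid_edges n) B"

lemma indep_iff:
  "bi n B \<longleftrightarrow>
   (\<forall>j. 3 \<le> j \<and> j < n \<longrightarrow> \<not> (j \<in> B \<and> Suc j \<in> B)) \<and> \<not> (n \<in> B \<and> 3 \<in> B)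
   \<and> (\<forall>j. 3 \<le> j \<and> j \<le> n \<longrightarrow> \<not> (1 \<in> B \<and> j \<in> B))
   \<and> (\<forall>j. 3 \<le> j \<and> j \<le> n \<longrightarrow> \<not> (2 \<in> B \<and> j \<in> B))"
proof -
  have 1: "(\<forall>e\<in>{{j, j + 1} | j. 3 \<le> j \<and> j < n}. \<not> e \<subseteq> B) \<longleftrightarrow> (\<forall>j. 3 \<le> j \<and> j < n \<longrightarrow> \<not> (j \<in> B \<and> Suc j \<in> B))"
    by auto
  have 2: "(\<forall>e\<in>{{n, 3}}. \<not> e \<subseteq> B) \<longleftrightarrow> \<not> (n \<in> B \<and> 3 \<in> B)" by auto
  have 3: "(\<forall>e\<in>{{1, j} | j. 3 \<le> j \<and> j \<le> n}. \<not> e \<subseteq> B) \<longleftrightarrow> (\<forall>j. 3 \<le> j \<and> j \<le> n \<longrightarrow> \<not> (1 \<in> B \<and> j \<in> B))"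
    by auto
  have 4: "(\<forall>e\<in>{{2, j} | j. 3 \<le> j \<and> j \<le> n}. \<not> e \<subseteq> B) \<longleftrightarrow> (\<forall>j. 3 \<le> j \<and> j \<le> n \<longrightarrow> \<not> (2 \<in> B \<and> j \<in> B))"
    by auto
  show ?thesis unfolding independent_set_def bipyramid_edges_def ball_Un 1 2 3 4 by (simp only: conj_assoc)
qed

lemma bi_mono: "bi n Y \<Longrightarrow> X \<subseteq> Y \<Longrightarrow> bi n X"
  unfolding independent_set_def by blast

lemma bi_path:
  assumes "5 \<le> n" "B \<subseteq> {3..n}"
  shows "bi n B \<longleftrightarrow> pind B \<and> \<not> (3 \<in> B \<and> n \<in> B)"
proof -
  have "(\<forall>j. 3 \<le> j \<and> j < n \<longrightarrow> \<not> (j \<in> B \<and> Suc j \<in> B)) \<longleftrightarrow> pind B"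
  proof
    assume L: "\<forall>j. 3 \<le> j \<and> j < n \<longrightarrow> \<not> (j \<in> B \<and> Suc j \<in> B)"
    show "pind B" unfolding pind_def
    proof (intro allI impI)
      fix i assume i: "i \<in> B"
      show "Suc i \<notin> B"
      proof
        assume si: "Suc i \<in> B"
        have "3 \<le> i" "Suc i \<le> n" using i si assms(2) by auto
        then show False using L i si by auto
      qed
    qed
  next
    assume "pind B" then show "\<forall>j. 3 \<le> j \<and> j < n \<longrightarrow> \<not> (j \<in> B \<and> Suc j \<in> B)"
      unfolding pind_def by blast
  qed
  moreover have "1 \<notin> B" "2 \<notin> B" using assms(2) by auto
  ultimately show ?thesis unfolding indep_iff by blast
qed

lemma bi_single: "5 \<le> n \<Longrightarrow> bi n {x}"
  unfolding indep_iff by auto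

lemma bi_12: "5 \<le> n \<Longrightarrow> bi n {1, 2}"
  unfolding indep_iff by auto

lemma not_bi_ins:
  assumes "5 \<le> n" "B \<subseteq> {3..n}" "B \<noteq> {}" "v = 1 \<or> v = 2"
  shows "\<not> bi n (insert v B)"
proof -
  obtain y where "y \<in> B" using assms(3) by blast
  then have "3 \<le> y" "y \<le> n" using assms(2) by auto
  then show ?thesis unfolding indep_iff using \<open>y \<in> B\<close> assms(4) by blast
qed

lemma card_part_le:
  assumes P: "partition_on A P" and fin: "finite A"
  shows "card P \<le> card A"
proof -
  define f where "f B = (SOME x. x \<in> B)" for B :: "'a set"
  have fB: "f B \<in> B" if "B \<in> P" for B
    using P that unfolding partition_on_def f_def by (metis all_not_in_conv someI_ex)
  have "inj_on f P"
  proof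
    fix B1 B2 assume "B1 \<in> P" "B2 \<in> P" "f B1 = f B2"
    then show "B1 = B2" using same_block[OF P, of B1 B2 "f B1"] fB by metis
  qed
  moreover have "f ` P \<subseteq> A" using fB P unfolding partition_on_def by blast
  ultimately show ?thesis using card_inj_on_le fin by blast
qed

definition ww :: "nat \<Rightarrow> int" where "ww s = (-1::int)^(s-3) * int (fact (s-3))"

lemma nonbi_ext1:
  assumes "X \<in> Q" "\<not> bi n X"
  shows "\<not> (\<forall>C\<in>insert {v} Q. bi n C)"
  using assms by blast

lemma nonbi_ext2:
  assumes "X \<in> Q" "\<not> bi n X" "C \<in> Q"
  shows "\<not> (\<forall>D\<in>ext2 v Q C. bi n D)"
proof (cases "C = X")
  case True
  have "insert v X \<in> ext2 v Q C" unfolding ext2_def True by blast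
  moreover have "\<not> bi n (insert v X)" using assms(2) bi_mono[of n "insert v X" X] by blast
  ultimately show ?thesis by blast
next
  case False
  then have "X \<in> ext2 v Q C" unfolding ext2_def using assms(1) by blast
  then show ?thesis using assms(2) by blast
qed

lemma ww_id:
  assumes "k \<ge> 2"
  shows "ww (Suc (Suc k)) + ww (Suc k) = w2 k - u k"
proof -
  obtain m where k: "k = Suc (Suc m)" using assms by (metis add_2_eq_Suc le_Suc_ex)
  show ?thesis unfolding k ww_def w2_def u_def by simp
qed

lemma total:
  assumes n: "5 \<le> n"
  shows "(\<Sum>R\<in>{R. partition_on {1..n} R \<and> (\<forall>B\<in>R. bi n B)}. ww (card R))
       = (\<Sum>P\<in>PB n. ww (Suc (Suc (card P))) + ww (Suc (card P)))"
proof -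
  define F where "F R = (if \<forall>B\<in>R. bi n B then ww (card R) else 0)" for R
  define G where "G Q = F (insert {1} Q) + (\<Sum>B\<in>Q. F (ext2 1 Q B))" for Q
  have e1: "{1..n} = insert 1 {2..n}" using n by auto
  have e2: "{2..n} = insert 2 {3..n}" using n by auto
  have f2: "finite {2..n}" and f3: "finite {3..n}" by simp_all
  have n1: "(1::nat) \<notin> {2..n}" and n2: "(2::nat) \<notin> {3..n}" by simp_all
  have Gz: "G Q = 0" if "X \<in> Q" "\<not> bi n X" for Q X
  proof -
    have "F (insert {1} Q) = 0" unfolding F_def by (rule if_not_P[OF nonbi_ext1[OF that]])
    moreover have "(\<Sum>B\<in>Q. F (ext2 1 Q B)) = 0"
      by (rule sum.neutral) (use nonbi_ext2[OF that] in \<open>auto simp: F_def\<close>)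
    ultimately show ?thesis unfolding G_def by simp
  qed
  have "(\<Sum>R\<in>{R. partition_on {1..n} R \<and> (\<forall>B\<in>R. bi n B)}. ww (card R))
      = (\<Sum>R | partition_on {1..n} R. F R)"
    unfolding F_def by (rule sum_filter_part) simp
  also have "\<dots> = (\<Sum>Q | partition_on {2..n} Q. G Q)"
    unfolding e1 G_def by (rule sum_insert_part[OF f2 n1])
  also have "\<dots> = (\<Sum>P | partition_on {3..n} P. G (insert {2} P) + (\<Sum>B\<in>P. G (ext2 2 P B)))"
    unfolding e2 by (rule sum_insert_part[OF f3 n2])
  also have "\<dots> = (\<Sum>P | partition_on {3..n} P. if (\<forall>C\<in>P. pind C) \<and> \<not> hasA n P
        then ww (Suc (Suc (card P))) + ww (Suc (card P)) else 0)"
  proof (rule sum.cong[OF refl])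
    fix P assume "P \<in> {P. partition_on {3..n} P}"
    then have P: "partition_on {3..n} P" by simp
    have fP: "finite P" using finite_elements[OF f3 P] .
    have Bsub: "B \<subseteq> {3..n}" "B \<noteq> {}" if "B \<in> P" for B
      using P that unfolding partition_on_def by blast+
    have z: "(\<Sum>B\<in>P. G (ext2 2 P B)) = 0"
    proof (rule sum.neutral, rule ballI)
      fix B assume B: "B \<in> P"
      have "insert 2 B \<in> ext2 2 P B" unfolding ext2_def by blast
      moreover have "\<not> bi n (insert 2 B)" using not_bi_ins[OF n Bsub[OF B]] by simp
      ultimately show "G (ext2 2 P B) = 0" by (rule Gz)
    qed
    have biall: "(\<forall>B\<in>P. bi n B) \<longleftrightarrow> (\<forall>C\<in>P. pind C) \<and> \<not> hasA n P"
      unfolding hasA_def using bi_path[OF n Bsub(1)] by blast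
    show "G (insert {2} P) + (\<Sum>B\<in>P. G (ext2 2 P B)) = (if (\<forall>C\<in>P. pind C) \<and> \<not> hasA n P
        then ww (Suc (Suc (card P))) + ww (Suc (card P)) else 0)"
    proof (cases "\<forall>B\<in>P. bi n B")
      case False
      then obtain X where X: "X \<in> P" "\<not> bi n X" by blast
      have G0: "G (insert {2} P) = 0" by (rule Gz[of X]) (use X in auto)
      have nc: "\<not> ((\<forall>C\<in>P. pind C) \<and> \<not> hasA n P)" using False biall by blast
      show ?thesis unfolding if_not_P[OF nc] G0 z by simp
    next
      case True
      define Q where "Q = insert {2} P"
      have Q: "partition_on {2..n} Q" unfolding Q_def e2 by (rule part_ext1[OF P n2])
      have cQ: "card Q = Suc (card P)" unfolding Q_def by (rule card_ext1[OF P f3 n2])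
      have fQ: "finite Q" using finite_elements[OF f2 Q] .
      have biQ: "\<forall>B\<in>Q. bi n B" unfolding Q_def using True bi_single[OF n] by blast
      have 1: "F (insert {1} Q) = ww (Suc (Suc (card P)))"
      proof -
        have "\<forall>B\<in>insert {1} Q. bi n B" using biQ bi_single[OF n] by blast
        moreover have "card (insert {1} Q) = Suc (card Q)" by (rule card_ext1[OF Q f2 n1])
        ultimately show ?thesis unfolding F_def cQ by simp
      qed
      have twoP: "{2} \<notin> P" using P n2 unfolding partition_on_def by blast
      have 3: "(\<Sum>C\<in>Q. F (ext2 1 Q C)) = F (ext2 1 Q {2}) + (\<Sum>C\<in>P. F (ext2 1 Q C))"
        unfolding Q_def by (rule sum.insert[OF fP twoP])
      have 4: "(\<Sum>C\<in>P. F (ext2 1 Q C)) = 0"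
      proof (rule sum.neutral, rule ballI)
        fix C assume C: "C \<in> P"
        have "insert 1 C \<in> ext2 1 Q C" unfolding ext2_def by blast
        moreover have "\<not> bi n (insert 1 C)" using not_bi_ins[OF n Bsub[OF C]] by simp
        ultimately have "\<not> (\<forall>B\<in>ext2 1 Q C. bi n B)" by blast
        then show "F (ext2 1 Q C) = 0" unfolding F_def by (rule if_not_P)
      qed
      have 5: "F (ext2 1 Q {2}) = ww (Suc (card P))"
      proof -
        have eq: "ext2 1 Q {2} = insert {1, 2} P" unfolding ext2_def Q_def using twoP by auto
        have "\<forall>B\<in>ext2 1 Q {2}. bi n B" unfolding eq using True bi_12[OF n] by blast
        moreover have "card (ext2 1 Q {2}) = card Q" by (rule card_ext2[OF Q f2 n1]) (simp add: Q_def)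
        ultimately show ?thesis unfolding F_def cQ by simp
      qed
      have G1: "G (insert {2} P) = ww (Suc (Suc (card P))) + ww (Suc (card P))"
        unfolding G_def Q_def[symmetric] 3 4 5 1 by simp
      have c: "(\<forall>C\<in>P. pind C) \<and> \<not> hasA n P" using True biall by blast
      show ?thesis unfolding if_P[OF c] G1 z by simp
    qed
  qed
  also have "\<dots> = (\<Sum>P\<in>PB n. ww (Suc (Suc (card P))) + ww (Suc (card P)))"
    unfolding PB_def by (rule sum_filter_part[symmetric]) simp
  finally show ?thesis .
qed

lemma bi_1j: "bi n B \<Longrightarrow> 3 \<le> j \<Longrightarrow> j \<le> n \<Longrightarrow> 1 \<in> B \<Longrightarrow> j \<notin> B"
  using indep_iff[of n B] by blast

lemma bi_jj: "bi n B \<Longrightarrow> 3 \<le> j \<Longrightarrow> j < n \<Longrightarrow> j \<in> B \<Longrightarrow> Suc j \<notin> B"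
  using indep_iff[of n B] by blast

lemma card_range:
  assumes n: "5 \<le> n" and R: "partition_on {1..n} R" and bR: "\<forall>B\<in>R. bi n B"
  shows "card R \<in> {3..n}"
proof -
  have fR: "finite R" using finite_elements[OF _ R] by simp
  have le: "card R \<le> n" using card_part_le[OF R] by simp
  have U: "\<Union>R = {1..n}" using R unfolding partition_on_def by blast
  have "1 \<in> \<Union>R" "3 \<in> \<Union>R" "4 \<in> \<Union>R" unfolding U using n by auto
  then obtain B1 B3 B4 where B1: "B1 \<in> R" "1 \<in> B1" and B3: "B3 \<in> R" "3 \<in> B3" and B4: "B4 \<in> R" "4 \<in> B4"
    by blast
  have i1: "bi n B1" "bi n B3" using bR B1 B3 by blast+
  have "3 \<notin> B1" by (rule bi_1j[OF i1(1) _ _ B1(2)]) (use n in auto)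
  then have d1: "B1 \<noteq> B3" using B3 by blast
  have "4 \<notin> B1" by (rule bi_1j[OF i1(1) _ _ B1(2)]) (use n in auto)
  then have d2: "B1 \<noteq> B4" using B4 by blast
  have "Suc 3 \<notin> B3" by (rule bi_jj[OF i1(2) _ _ B3(2)]) (use n in auto)
  then have d3: "B3 \<noteq> B4" using B4 by (auto simp: numeral_eq_Suc)
  have "card {B1, B3, B4} = 3" using d1 d2 d3 by simp
  moreover have "card {B1, B3, B4} \<le> card R" using B1 B3 B4 fR by (intro card_mono) auto
  ultimately show ?thesis using le by simp
qed

theorem mainTheorem17:
  fixes n :: nat
  assumes "n \<ge> 5"
  shows "\<bar>\<Sum>s = 3..n. (-1::int) ^ (s - 3) * int (fact (s - 3))
            * int (indep_partition_count {1..n} (bipyramid_edges n) s)\<bar> = int n - 4"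
proof -
  have n: "5 \<le> n" using assms .
  define X where "X = {R. partition_on {1..n} R \<and> (\<forall>B\<in>R. bi n B)}"
  have fX: "finite X" unfolding X_def
    by (rule finite_subset[OF _ finitely_many_partition_on[of "{1..n::nat}"]]) auto
  have img: "card ` X \<subseteq> {3..n}" unfolding X_def using card_range[OF n] by blast
  have "(\<Sum>s = 3..n. (-1::int) ^ (s - 3) * int (fact (s - 3))
            * int (indep_partition_count {1..n} (bipyramid_edges n) s))
      = (\<Sum>s = 3..n. (\<Sum>R\<in>{R. R \<in> X \<and> card R = s}. ww (card R)))"
  proof (rule sum.cong[OF refl])
    fix s
    have eq: "{R. R \<in> X \<and> card R = s} = {P. partition_on {1..n} P \<and> card P = s \<and> (\<forall>B\<in>P. bi n B)}"
      unfolding X_def by blast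
    have "(\<Sum>R\<in>{R. R \<in> X \<and> card R = s}. ww (card R)) = (\<Sum>R\<in>{R. R \<in> X \<and> card R = s}. ww s)"
      by (rule sum.cong) auto
    also have "\<dots> = int (card {R. R \<in> X \<and> card R = s}) * ww s" by simp
    finally show "(-1::int) ^ (s - 3) * int (fact (s - 3))
            * int (indep_partition_count {1..n} (bipyramid_edges n) s) = (\<Sum>R\<in>{R. R \<in> X \<and> card R = s}. ww (card R))"
      unfolding indep_partition_count_def eq ww_def by simp
  qed
  also have "\<dots> = (\<Sum>R\<in>X. ww (card R))"
    by (rule sum.group[OF fX _ img]) simp
  also have "\<dots> = (\<Sum>P\<in>PB n. ww (Suc (Suc (card P))) + ww (Suc (card P)))"
    unfolding X_def by (rule total[OF n])
  also have "\<dots> = (\<Sum>P\<in>PB n. w2 (card P) - u (card P))"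
    by (rule sum.cong[OF refl]) (rule ww_id, rule PB_card1, simp, use n in simp)
  also have "\<dots> = (\<Sum>P\<in>PB n. w2 (card P)) - (\<Sum>P\<in>PB n. u (card P))"
    by (rule sum_subtractf)
  also have "\<dots> = (-1)^n - (-1)^n * (int n - 3)"
    using V_formula[of n] U_formula[of n] n by simp
  also have "\<dots> = (-1)^n * (4 - int n)" by (simp add: algebra_simps)
  finally have S: "(\<Sum>s = 3..n. (-1::int) ^ (s - 3) * int (fact (s - 3))
            * int (indep_partition_count {1..n} (bipyramid_edges n) s)) = (-1)^n * (4 - int n)" .
  show ?thesis unfolding S abs_mult power_abs using n by simp
qed

end
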